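(* Let $d\ge 1$, $T\ge 1$, let $\mathcal{X}\subseteq\mathbb{R}^d$ be a non-empty closed convex set, and let $0<\mu\le L$. Let $f_1,\dots,f_T:\mathcal{X}\to[0,\infty)$ be differentiable with $\frac{\mu}{2}\|y-x\|^2\le f_t(y)-f_t(x)-\langle\nabla f_t(x),y-x\rangle\le\frac{L}{2}\|y-x\|^2$ for all $t$ and $x,y\in\mathcal{X}$. Let $x_1,\dots,x_T$ be the iterates of the OMGD algorithm with $K=\lceil\frac{L+\mu}{2\mu}\ln4\rceil$ from a starting point $x_0\in\mathcal{X}$. Then $$\sum_{t=1}^T\frac12\|x_t-x_{t-1}\|^2\le 5\|x_1-x_1^\star\|^2+10\mathcal{P}_{2,T}^\star.$$
   Context: $x_t^\star=\arg\min_{x\in\mathcal{X}}f_t(x)$ and $\mathcal{P}_{2,T}^\star=\sum_{t=2}^T\|x_t^\star-x_{t-1}^\star\|^2$. OMGD with parameter $K$: $x_1=x_0$; for $t=2,\dots,T$, $z_t^{(0)}=x_{t-1}$, $z_t^{(k)}=\Pi_{\mathcal{X}}\big(z_t^{(k-1)}-\frac1L\nabla f_{t-1}(z_t^{(k-1)})\big)$ ($k=1,\dots,K$), $x_t=z_t^{(K)}$, where $\Pi_{\mathcal{X}}$ is Euclidean projection onto $\mathcal{X}$. *)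

theory Defs
  imports "HOL-Analysis.Analysis"
begin

definition argmin_on :: "'a set \<Rightarrow> ('a \<Rightarrow> real) \<Rightarrow> 'a" where
  "argmin_on X h = (SOME x. x \<in> X \<and> (\<forall>y\<in>X. h x \<le> h y))"

definition pgd_step :: "'a::euclidean_space set \<Rightarrow> real \<Rightarrow> ('a \<Rightarrow> 'a) \<Rightarrow> 'a \<Rightarrow> 'a" where
  "pgd_step X L g z = closest_point X (z - (1 / L) *\<^sub>R g z)"

fun omgd :: "'a::euclidean_space set \<Rightarrow> real \<Rightarrow> (nat \<Rightarrow> 'a \<Rightarrow> 'a) \<Rightarrow> nat \<Rightarrow> 'a \<Rightarrow> nat \<Rightarrow> 'a" where
  "omgd X L gf K x0 0 = x0"
| "omgd X L gf K x0 (Suc 0) = x0"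
| "omgd X L gf K x0 (Suc (Suc n)) = (pgd_step X L (gf (Suc n)) ^^ K) (omgd X L gf K x0 (Suc n))"

end

theory Submission
  imports Defs
begin

lemma opt_gap:
  fixes X :: "'a::euclidean_space set" and F :: "'a \<Rightarrow> real" and g :: "'a \<Rightarrow> 'a"
  assumes "convex X" "0 < L" "s \<in> X" "p \<in> X"
    and smin: "\<forall>y\<in>X. F s \<le> F y"
    and sc: "\<And>x y. x \<in> X \<Longrightarrow> y \<in> X \<Longrightarrow> \<mu> / 2 * (norm (y - x))\<^sup>2 \<le> F y - F x - g x \<bullet> (y - x)"
    and sm: "\<And>x y. x \<in> X \<Longrightarrow> y \<in> X \<Longrightarrow> F y - F x - g x \<bullet> (y - x) \<le> L / 2 * (norm (y - x))\<^sup>2"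
  shows "F s + \<mu> / 2 * (norm (p - s))\<^sup>2 \<le> F p"
proof -
  have c0: "g s \<bullet> (p - s) \<ge> 0"
  proof (rule ccontr)
    assume "\<not> ?thesis"
    hence c: "g s \<bullet> (p - s) < 0" by simp
    define c where "c = g s \<bullet> (p - s)"
    define N where "N = (norm (p - s))\<^sup>2"
    have "N > 0" unfolding N_def using c by (cases "p = s") auto
    define u where "u = min 1 (- c / (L * N))"
    have "0 < - c" using c unfolding c_def by linarith
    moreover have LN: "0 < L * N" using \<open>N > 0\<close> \<open>0 < L\<close> by (rule mult_pos_pos[rotated])
    ultimately have "- c / (L * N) > 0" by (rule divide_pos_pos)
    hence u0: "u > 0" unfolding u_def by simp
    have u1: "u \<le> 1" unfolding u_def by simp
    have "u \<le> - c / (L * N)" unfolding u_def by simp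
    hence "u * (L * N) \<le> - c / (L * N) * (L * N)" using \<open>0 < L * N\<close> by (intro mult_right_mono) simp_all
    also have "\<dots> = - c" using \<open>N > 0\<close> \<open>0 < L\<close> by simp
    finally have u2: "u * (L * N) \<le> - c" .
    define w where "w = s + u *\<^sub>R (p - s)"
    have "w = (1 - u) *\<^sub>R s + u *\<^sub>R p" unfolding w_def by (simp add: algebra_simps)
    moreover have "(1 - u) *\<^sub>R s + u *\<^sub>R p \<in> X"
      using u0 u1 by (intro convexD[OF assms(1) assms(3) assms(4)]) simp_all
    ultimately have wX: "w \<in> X" by simp
    have "F w - F s - g s \<bullet> (w - s) \<le> L / 2 * (norm (w - s))\<^sup>2" using sm[OF assms(3) wX] .
    moreover have "g s \<bullet> (w - s) = u * c" unfolding w_def c_def by simp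
    moreover have "(norm (w - s))\<^sup>2 = u\<^sup>2 * N" unfolding w_def N_def using u0
      by (simp add: power_mult_distrib)
    ultimately have "F w \<le> F s + u * c + L / 2 * (u\<^sup>2 * N)" by simp
    moreover have "L / 2 * (u\<^sup>2 * N) \<le> u * (- c) / 2"
    proof -
      have h: "u * (u * (L * N)) \<le> u * (- c)" using u0 by (intro mult_left_mono[OF u2]) simp
      have "L / 2 * (u\<^sup>2 * N) = u * (u * (L * N)) / 2" by (simp add: power2_eq_square)
      thus ?thesis using h by linarith
    qed
    moreover have "u * c < 0" using u0 c unfolding c_def by (rule mult_pos_neg)
    moreover have "u * (- c) = - (u * c)" by simp
    ultimately have "F w < F s" by linarith
    moreover have "F s \<le> F w" using smin wX by blast
    ultimately show False by linarith
  qed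
  have "\<mu> / 2 * (norm (p - s))\<^sup>2 \<le> F p - F s - g s \<bullet> (p - s)" using sc[OF assms(3,4)] .
  thus ?thesis using c0 by linarith
qed

lemma sq_add: "(norm ((a::'a::real_inner) + b))\<^sup>2 = (norm a)\<^sup>2 + 2 * (a \<bullet> b) + (norm b)\<^sup>2"
  by (simp add: power2_norm_eq_inner inner_add_left inner_add_right inner_commute[of b a])

lemma alg_comb:
  fixes \<mu> L P A Q Z :: real
  assumes "\<mu> / 2 * P \<le> L * A + L / 2 * Q - \<mu> / 2 * Z" "Z = Q + 2 * A + P"
  shows "(L + \<mu>) * P \<le> (L - \<mu>) * Z"
proof -
  have "L * Z = L * Q + 2 * (L * A) + L * P" using assms(2) by (simp add: algebra_simps)
  thus ?thesis using assms(1) unfolding distrib_right left_diff_distrib by linarith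
qed

lemma one_step:
  fixes X :: "'a::euclidean_space set" and F :: "'a \<Rightarrow> real" and g :: "'a \<Rightarrow> 'a"
  assumes "convex X" "closed X" "X \<noteq> {}" "0 < L" "s \<in> X" "z \<in> X"
    and smin: "\<forall>y\<in>X. F s \<le> F y"
    and sc: "\<And>x y. x \<in> X \<Longrightarrow> y \<in> X \<Longrightarrow> \<mu> / 2 * (norm (y - x))\<^sup>2 \<le> F y - F x - g x \<bullet> (y - x)"
    and sm: "\<And>x y. x \<in> X \<Longrightarrow> y \<in> X \<Longrightarrow> F y - F x - g x \<bullet> (y - x) \<le> L / 2 * (norm (y - x))\<^sup>2"
  shows "pgd_step X L g z \<in> X \<and> (L + \<mu>) * (norm (pgd_step X L g z - s))\<^sup>2 \<le> (L - \<mu>) * (norm (z - s))\<^sup>2"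
proof -
  define p where "p = pgd_step X L g z"
  have pX: "p \<in> X" unfolding p_def pgd_step_def using assms(2,3) by (rule closest_point_in_set)
  have proj: "inner ((z - (1 / L) *\<^sub>R g z) - p) (s - p) \<le> 0"
    unfolding p_def pgd_step_def using closest_point_dot[OF assms(1,2,5)] .
  have o: "F s + \<mu> / 2 * (norm (p - s))\<^sup>2 \<le> F p"
    by (rule opt_gap[OF assms(1,4,5) pX smin sc sm])
  have smp: "F p - F z - g z \<bullet> (p - z) \<le> L / 2 * (norm (z - p))\<^sup>2" using sm[OF assms(6) pX] by (simp add: norm_minus_commute)
  have scs: "\<mu> / 2 * (norm (z - s))\<^sup>2 \<le> F s - F z - g z \<bullet> (s - z)" using sc[OF assms(6,5)] by (simp add: norm_minus_commute)
  have proj2: "g z \<bullet> (p - s) \<le> L * ((z - p) \<bullet> (p - s))"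
  proof -
    have "(z - p) \<bullet> (s - p) - (1 / L) * (g z \<bullet> (s - p)) \<le> 0"
      using proj by (simp add: inner_diff_left algebra_simps)
    hence "L * ((z - p) \<bullet> (s - p) - (1 / L) * (g z \<bullet> (s - p))) \<le> 0" using assms(4)
      by (simp add: mult_nonneg_nonpos)
    moreover have "L * ((z - p) \<bullet> (s - p) - (1 / L) * (g z \<bullet> (s - p))) = L * ((z - p) \<bullet> (s - p)) - g z \<bullet> (s - p)"
      using assms(4) by (simp add: right_diff_distrib)
    moreover have "g z \<bullet> (p - s) = - (g z \<bullet> (s - p))" "(z - p) \<bullet> (p - s) = - ((z - p) \<bullet> (s - p))"
      by (simp_all add: inner_diff_right)
    ultimately show ?thesis by simp
  qed
  have ex1: "(norm (z - s))\<^sup>2 = (norm (z - p))\<^sup>2 + 2 * ((z - p) \<bullet> (p - s)) + (norm (p - s))\<^sup>2"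
    using sq_add[of "z - p" "p - s"] by simp
  have gs: "g z \<bullet> (p - z) - g z \<bullet> (s - z) = g z \<bullet> (p - s)" by (simp add: inner_diff_right)
  have nz: "(norm (s - z))\<^sup>2 = (norm (z - s))\<^sup>2" "(norm (p - z))\<^sup>2 = (norm (z - p))\<^sup>2" by (simp_all add: norm_minus_commute)
  have "\<mu> / 2 * (norm (p - s))\<^sup>2 \<le> g z \<bullet> (p - s) + L / 2 * (norm (z - p))\<^sup>2 - \<mu> / 2 * (norm (z - s))\<^sup>2"
    using o smp scs gs by linarith
  hence "\<mu> / 2 * (norm (p - s))\<^sup>2 \<le> L * ((z - p) \<bullet> (p - s)) + L / 2 * (norm (z - p))\<^sup>2 - \<mu> / 2 * (norm (z - s))\<^sup>2"
    using proj2 by linarith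
  hence "(L + \<mu>) * (norm (p - s))\<^sup>2 \<le> (L - \<mu>) * (norm (z - s))\<^sup>2"
    using ex1 by (rule alg_comb)
  thus ?thesis using pX unfolding p_def by simp
qed

lemma exists_min:
  fixes X :: "'a::euclidean_space set" and F :: "'a \<Rightarrow> real"
  assumes "closed X" "a \<in> X" "0 < \<mu>" "continuous_on X F"
    and lb: "\<And>y. y \<in> X \<Longrightarrow> \<mu> / 2 * (norm (y - a))\<^sup>2 \<le> F y - F a - ga \<bullet> (y - a)"
  shows "\<exists>s\<in>X. \<forall>y\<in>X. F s \<le> F y"
proof -
  define R where "R = 2 * norm ga / \<mu> + 1"
  define S where "S = X \<inter> cball a R"
  have "compact S" unfolding S_def using assms(1) by (simp add: closed_Int_compact)
  moreover have "a \<in> S" unfolding S_def R_def using assms(2,3) by simp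
  moreover have "continuous_on S F" unfolding S_def using assms(4) by (rule continuous_on_subset) auto
  ultimately obtain s where sS: "s \<in> S" and smin: "\<forall>y\<in>S. F s \<le> F y"
    using continuous_attains_inf by blast
  have "F s \<le> F y" if yX: "y \<in> X" for y
  proof (cases "y \<in> S")
    case True thus ?thesis using smin by blast
  next
    case False
    hence r: "norm (y - a) > R" unfolding S_def using yX by (simp add: dist_norm norm_minus_commute)
    have "ga \<bullet> (y - a) \<ge> - (norm ga * norm (y - a))"
      using Cauchy_Schwarz_ineq2[of ga "y - a"] by (auto simp: abs_le_iff)
    moreover have "norm ga * norm (y - a) < \<mu> / 2 * (norm (y - a))\<^sup>2"
    proof -
      have "2 * norm ga / \<mu> < norm (y - a)" using r unfolding R_def by simp
      hence "2 * norm ga < \<mu> * norm (y - a)" using assms(3) by (simp add: divide_less_eq mult.commute)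
      hence "2 * norm ga * norm (y - a) < \<mu> * norm (y - a) * norm (y - a)"
      proof -
        have "R > 0" unfolding R_def using assms(3) by (simp add: add_nonneg_pos)
        hence "norm (y - a) > 0" using r by linarith
        thus ?thesis by (rule mult_strict_right_mono[OF \<open>2 * norm ga < \<mu> * norm (y - a)\<close>])
      qed
      thus ?thesis by (simp add: power2_eq_square)
    qed
    ultimately have "F a < F y" using lb[OF yX] by linarith
    moreover have "F s \<le> F a" using smin \<open>a \<in> S\<close> by blast
    ultimately show ?thesis by simp
  qed
  thus ?thesis using sS unfolding S_def by blast
qed

lemma iter_steps:
  fixes X :: "'a::euclidean_space set" and F :: "'a \<Rightarrow> real" and g :: "'a \<Rightarrow> 'a"
  assumes "convex X" "closed X" "X \<noteq> {}" "0 < \<mu>" "\<mu> \<le> L" "s \<in> X" "z \<in> X"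
    and smin: "\<forall>y\<in>X. F s \<le> F y"
    and sc: "\<And>x y. x \<in> X \<Longrightarrow> y \<in> X \<Longrightarrow> \<mu> / 2 * (norm (y - x))\<^sup>2 \<le> F y - F x - g x \<bullet> (y - x)"
    and sm: "\<And>x y. x \<in> X \<Longrightarrow> y \<in> X \<Longrightarrow> F y - F x - g x \<bullet> (y - x) \<le> L / 2 * (norm (y - x))\<^sup>2"
  shows "(pgd_step X L g ^^ k) z \<in> X \<and> (norm ((pgd_step X L g ^^ k) z - s))\<^sup>2 \<le> ((L - \<mu>) / (L + \<mu>)) ^ k * (norm (z - s))\<^sup>2"
proof (induction k)
  case 0
  then show ?case using assms(7) by simp
next
  case (Suc k)
  define w where "w = (pgd_step X L g ^^ k) z"
  have wX: "w \<in> X" and ih: "(norm (w - s))\<^sup>2 \<le> ((L - \<mu>) / (L + \<mu>)) ^ k * (norm (z - s))\<^sup>2"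
    using Suc unfolding w_def by auto
  have L0: "0 < L" using assms(4,5) by simp
  have os: "pgd_step X L g w \<in> X \<and> (L + \<mu>) * (norm (pgd_step X L g w - s))\<^sup>2 \<le> (L - \<mu>) * (norm (w - s))\<^sup>2"
    by (rule one_step[OF assms(1,2,3) L0 assms(6) wX smin sc sm])
  have q0: "0 \<le> (L - \<mu>) / (L + \<mu>)" using assms(4,5) by simp
  have "(norm (pgd_step X L g w - s))\<^sup>2 \<le> (L - \<mu>) / (L + \<mu>) * (norm (w - s))\<^sup>2"
    using os assms(4,5) by (simp add: pos_le_divide_eq mult.commute mult.left_commute)
  also have "\<dots> \<le> (L - \<mu>) / (L + \<mu>) * (((L - \<mu>) / (L + \<mu>)) ^ k * (norm (z - s))\<^sup>2)"
    using ih q0 by (rule mult_left_mono)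
  finally show ?case using os unfolding w_def by (simp add: mult.assoc)
qed

lemma rate_bound:
  fixes \<mu> L :: real
  assumes "0 < \<mu>" "\<mu> \<le> L"
  shows "((L - \<mu>) / (L + \<mu>)) ^ nat \<lceil>(L + \<mu>) / (2 * \<mu>) * ln 4\<rceil> \<le> 1 / 4"
proof -
  define K where "K = nat \<lceil>(L + \<mu>) / (2 * \<mu>) * ln 4\<rceil>"
  define a where "a = 2 * \<mu> / (L + \<mu>)"
  have a0: "a > 0" unfolding a_def using assms by simp
  have q: "(L - \<mu>) / (L + \<mu>) = 1 + (- a)" unfolding a_def using assms by (simp add: field_simps)
  have q0: "0 \<le> (L - \<mu>) / (L + \<mu>)" using assms by simp
  have "(L - \<mu>) / (L + \<mu>) \<le> exp (- a)" unfolding q by (rule exp_ge_add_one_self)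
  hence "((L - \<mu>) / (L + \<mu>)) ^ K \<le> exp (- a) ^ K" using q0 by (rule power_mono)
  also have "\<dots> = exp (real K * (- a))" using exp_of_nat_mult[of K "- a"] by simp
  also have "\<dots> \<le> exp (- ln 4)"
  proof -
    have "(L + \<mu>) / (2 * \<mu>) * ln 4 \<le> real K" unfolding K_def by (rule real_nat_ceiling_ge)
    hence "ln 4 \<le> real K * a" unfolding a_def using assms
      by (simp add: field_simps)
    thus ?thesis by simp
  qed
  also have "\<dots> = 1 / 4" by (simp add: exp_minus)
  finally show ?thesis unfolding K_def .
qed

theorem lemma3:
  fixes X :: "'a::euclidean_space set"
    and f :: "nat \<Rightarrow> 'a \<Rightarrow> real" and gf :: "nat \<Rightarrow> 'a \<Rightarrow> 'a"
    and \<mu> L :: real and T :: nat and x0 :: 'a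
  assumes "T \<ge> 1"
    and "X \<noteq> {}" and "closed X" and "convex X"
    and "0 < \<mu>" and "\<mu> \<le> L"
    and nonneg: "\<And>t x. t \<in> {1..T} \<Longrightarrow> x \<in> X \<Longrightarrow> f t x \<ge> 0"
    and grad: "\<And>t x. t \<in> {1..T} \<Longrightarrow> x \<in> X \<Longrightarrow>
                 (f t has_derivative (\<lambda>h. gf t x \<bullet> h)) (at x within X)"
    and sc: "\<And>t x y. t \<in> {1..T} \<Longrightarrow> x \<in> X \<Longrightarrow> y \<in> X \<Longrightarrow>
                 \<mu> / 2 * (norm (y - x))\<^sup>2 \<le> f t y - f t x - gf t x \<bullet> (y - x)"
    and sm: "\<And>t x y. t \<in> {1..T} \<Longrightarrow> x \<in> X \<Longrightarrow> y \<in> X \<Longrightarrow>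
                 f t y - f t x - gf t x \<bullet> (y - x) \<le> L / 2 * (norm (y - x))\<^sup>2"
    and "x0 \<in> X"
  shows "(let K = nat \<lceil>(L + \<mu>) / (2 * \<mu>) * ln 4\<rceil>;
              x = omgd X L gf K x0;
              xs = (\<lambda>t. argmin_on X (f t))
          in (\<Sum>t=1..T. 1/2 * (norm (x t - x (t - 1)))\<^sup>2)
             \<le> 5 * (norm (x 1 - xs 1))\<^sup>2 + 10 * (\<Sum>t=2..T. (norm (xs t - xs (t - 1)))\<^sup>2))"
proof -
  define K where "K = nat \<lceil>(L + \<mu>) / (2 * \<mu>) * ln 4\<rceil>"
  define x where "x = omgd X L gf K x0"
  define xs where "xs = (\<lambda>t. argmin_on X (f t))"
  have L0: "0 < L" using assms(5,6) by simp
  have xsP: "xs t \<in> X \<and> (\<forall>y\<in>X. f t (xs t) \<le> f t y)" if t: "t \<in> {1..T}" for t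
  proof -
    have "\<forall>z\<in>X. continuous (at z within X) (f t)"
      using has_derivative_continuous[OF grad[OF t]] by simp
    hence "continuous_on X (f t)" using continuous_on_eq_continuous_within by auto
    hence "\<exists>s\<in>X. \<forall>y\<in>X. f t s \<le> f t y"
      by (rule exists_min[OF assms(3) assms(11) assms(5)]) (rule sc[OF t assms(11)])
    hence "\<exists>s. s \<in> X \<and> (\<forall>y\<in>X. f t s \<le> f t y)" by blast
    thus ?thesis unfolding xs_def argmin_on_def by (rule someI_ex)
  qed
  have xsuc: "x (Suc (Suc n)) = (pgd_step X L (gf (Suc n)) ^^ K) (x (Suc n))" for n
    unfolding x_def by simp
  have x1: "x (Suc 0) = x0" "x 0 = x0" unfolding x_def by simp_all
  have xX: "n \<le> T \<longrightarrow> x n \<in> X" for n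
  proof (induction n)
    case 0 thus ?case using x1 assms(11) by simp
  next
    case (Suc n)
    show ?case
    proof (cases n)
      case 0 thus ?thesis using x1 assms(11) by simp
    next
      case (Suc m)
      show ?thesis
      proof
        assume le: "Suc n \<le> T"
        have nT: "Suc m \<in> {1..T}" using le Suc by simp
        have "x n \<in> X" using le \<open>n \<le> T \<longrightarrow> x n \<in> X\<close> by simp
        hence xm: "x (Suc m) \<in> X" using Suc by simp
        have st: "xs (Suc m) \<in> X" "\<forall>y\<in>X. f (Suc m) (xs (Suc m)) \<le> f (Suc m) y" using xsP[OF nT] by auto
        have "(pgd_step X L (gf (Suc m)) ^^ K) (x (Suc m)) \<in> X"
          using iter_steps[OF assms(4,3,2,5,6) st(1) xm st(2) sc[OF nT] sm[OF nT], of K] by (rule conjunct1)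
        thus "x (Suc n) \<in> X" using xsuc Suc by simp
      qed
    qed
  qed
  define d where "d n = norm (x n - xs n)" for n
  define D where "D n = norm (x (Suc n) - xs n)" for n
  define \<delta> where "\<delta> n = norm (xs n - xs (n - 1))" for n
  define m where "m n = norm (x n - x (n - 1))" for n
  have contr: "D n \<le> d n / 2" if n1: "1 \<le> n" and nT: "Suc n \<le> T" for n
  proof -
    obtain k where k: "n = Suc k" using n1 by (cases n) auto
    have nT': "n \<in> {1..T}" using n1 nT by simp
    have xn: "x n \<in> X" using xX nT by simp
    have st: "xs n \<in> X" "\<forall>y\<in>X. f n (xs n) \<le> f n y" using xsP[OF nT'] by auto
    have "(norm ((pgd_step X L (gf n) ^^ K) (x n) - xs n))\<^sup>2 \<le> ((L - \<mu>) / (L + \<mu>)) ^ K * (norm (x n - xs n))\<^sup>2"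
      using iter_steps[OF assms(4,3,2,5,6) st(1) xn st(2) sc[OF nT'] sm[OF nT'], of K] by (rule conjunct2)
    also have "\<dots> \<le> 1 / 4 * (norm (x n - xs n))\<^sup>2"
      using rate_bound[OF assms(5,6)] unfolding K_def by (rule mult_right_mono) simp
    finally have "(D n)\<^sup>2 \<le> (d n / 2)\<^sup>2" unfolding D_def d_def using xsuc[of k] k
      by (simp add: power_divide)
    thus ?thesis by (rule power2_le_imp_le) (simp add: d_def)
  qed
  have drec: "(d (Suc n))\<^sup>2 \<le> (d n)\<^sup>2 / 2 + 2 * (\<delta> (Suc n))\<^sup>2" if n1: "1 \<le> n" and nT: "Suc n \<le> T" for n
  proof -
    have "x (Suc n) - xs (Suc n) = (x (Suc n) - xs n) + (xs n - xs (Suc n))" by simp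
    hence "d (Suc n) \<le> D n + norm (xs n - xs (Suc n))" unfolding d_def D_def by (metis norm_triangle_ineq)
    also have "norm (xs n - xs (Suc n)) = \<delta> (Suc n)" unfolding \<delta>_def by (simp add: norm_minus_commute)
    finally have a: "d (Suc n) \<le> D n + \<delta> (Suc n)" .
    have "(d (Suc n))\<^sup>2 \<le> (D n + \<delta> (Suc n))\<^sup>2" using a by (rule power_mono) (simp add: d_def)
    also have "\<dots> \<le> 2 * (D n)\<^sup>2 + 2 * (\<delta> (Suc n))\<^sup>2"
    proof -
      have "0 \<le> (D n - \<delta> (Suc n))\<^sup>2" by simp
      thus ?thesis unfolding power2_sum power2_diff by linarith
    qed
    also have "(D n)\<^sup>2 \<le> (d n / 2)\<^sup>2" using contr[OF n1 nT] by (rule power_mono) (simp add: D_def)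
    finally show ?thesis by (simp add: power_divide)
  qed
  have mrec: "(m (Suc n))\<^sup>2 \<le> 9 / 4 * (d n)\<^sup>2" if n1: "1 \<le> n" and nT: "Suc n \<le> T" for n
  proof -
    have "x (Suc n) - x n = (x (Suc n) - xs n) - (x n - xs n)" by simp
    hence "m (Suc n) \<le> D n + d n" unfolding m_def d_def D_def by (metis diff_Suc_1 norm_triangle_ineq4)
    also have "\<dots> \<le> 3 / 2 * d n" using contr[OF n1 nT] by simp
    finally have "(m (Suc n))\<^sup>2 \<le> (3 / 2 * d n)\<^sup>2" by (rule power_mono) (simp add: m_def)
    moreover have "(3 / 2 * d n)\<^sup>2 = 9 / 4 * (d n)\<^sup>2" by (simp add: power2_eq_square)
    ultimately show ?thesis by linarith
  qed
  have inv: "1 \<le> n \<longrightarrow> n \<le> T \<longrightarrow> (\<Sum>t=1..n. 1/2 * (m t)\<^sup>2) + 9 / 4 * (d n)\<^sup>2 \<le> 5 * (d 1)\<^sup>2 + 10 * (\<Sum>t=2..n. (\<delta> t)\<^sup>2)" for n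
  proof (induction n)
    case 0 thus ?case by simp
  next
    case (Suc n)
    show ?case
    proof (cases n)
      case 0
      have "m 1 = 0" unfolding m_def using x1 by simp
      thus ?thesis using 0 by simp
    next
      case (Suc k)
      show ?thesis
      proof (intro impI)
        assume nT: "Suc n \<le> T"
        have n1: "1 \<le> n" using Suc by simp
        have ih: "(\<Sum>t=1..n. 1/2 * (m t)\<^sup>2) + 9 / 4 * (d n)\<^sup>2 \<le> 5 * (d 1)\<^sup>2 + 10 * (\<Sum>t=2..n. (\<delta> t)\<^sup>2)"
          using \<open>1 \<le> n \<longrightarrow> n \<le> T \<longrightarrow> _\<close> n1 nT by simp
        have s1: "(\<Sum>t=1..Suc n. 1/2 * (m t)\<^sup>2) = (\<Sum>t=1..n. 1/2 * (m t)\<^sup>2) + 1/2 * (m (Suc n))\<^sup>2"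
          by simp
        have s2: "(\<Sum>t=2..Suc n. (\<delta> t)\<^sup>2) = (\<Sum>t=2..n. (\<delta> t)\<^sup>2) + (\<delta> (Suc n))\<^sup>2"
          using n1 by simp
        show "(\<Sum>t=1..Suc n. 1/2 * (m t)\<^sup>2) + 9 / 4 * (d (Suc n))\<^sup>2 \<le> 5 * (d 1)\<^sup>2 + 10 * (\<Sum>t=2..Suc n. (\<delta> t)\<^sup>2)"
          using ih s1 s2 drec[OF n1 nT] mrec[OF n1 nT] zero_le_power2[of "\<delta> (Suc n)"] by linarith
      qed
    qed
  qed
  have "(\<Sum>t=1..T. 1/2 * (m t)\<^sup>2) \<le> 5 * (d 1)\<^sup>2 + 10 * (\<Sum>t=2..T. (\<delta> t)\<^sup>2)"
  proof -
    have "(\<Sum>t=1..T. 1/2 * (m t)\<^sup>2) + 9 / 4 * (d T)\<^sup>2 \<le> 5 * (d 1)\<^sup>2 + 10 * (\<Sum>t=2..T. (\<delta> t)\<^sup>2)"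
      using inv[of T] assms(1) by simp
    moreover have "0 \<le> 9 / 4 * (d T)\<^sup>2" by simp
    ultimately show ?thesis by linarith
  qed
  thus ?thesis unfolding Let_def K_def[symmetric] x_def[symmetric] xs_def[symmetric]
    by (simp add: m_def d_def \<delta>_def)
qed

end
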